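(* Let $A\in SL_3(\mathfrak{o})$. Then there exist $y_1,y_2,y_3\in Y(\mathfrak{o})$, $d\in D(3)$, $u\in U(3)$ and $C\in\Gamma_\infty(3)$ such that $$A=\varphi_2(y_1^{-1})\,\varphi_1(y_2^{-1})\,\varphi_2(y_3^{-1})\,d\,u\,C.$$
   Context: Let $\omega=e^{2\pi i/3}$, $\mathfrak{o}=\mathbb{Z}[\omega]$ (a PID), $\mathfrak{o}^\times=\{\pm1,\pm\omega,\pm\omega^2\}$. Fix a set of representatives of the nonzero elements of $\mathfrak{o}$ modulo multiplication by units (e.g. the $z\neq0$ with $0\le\arg z<\pi/3$); "$c\in(\mathfrak{o}-\{0\})/\mathfrak{o}^\times$" means $c$ is one of these representatives. For each nonzero $c$ fix a set of representatives of $\mathfrak{o}/c\mathfrak{o}$; "$a\in\mathfrak{o}/c\mathfrak{o}$" means $a$ belongs to this set. $Y(\mathfrak{o})=\{\begin{pmatrix}a&b\\c&d\end{pmatrix}\in SL_2(\mathfrak{o}) : c\in(\mathfrak{o}-\{0\})/\mathfrak{o}^\times,\ a\in\mathfrak{o}/c\mathfrak{o}\}\cup\{I_2\}$. $\Gamma(3)=\{A\in SL_3(\mathfrak{o}):A\equiv I_3\pmod{3\mathfrak{o}}\}$ (entrywise) and $\Gamma_\infty(3)$ is its subgroup of upper triangular unipotent matrices. $D(3)$ is the set of diagonal matrices $\mathrm{diag}(i,j,k)$ with $i,j,k\in\mathfrak{o}$, $ijk=1$. $U(3)$ is the set of matrices $\begin{pmatrix}1&\alpha&\beta\\&1&\gamma\\&&1\end{pmatrix}$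 with $\alpha,\beta,\gamma\in\{0,1,2\}+\{0,1,2\}\omega$. For $y=\begin{pmatrix}a&b\\c&d\end{pmatrix}\in SL_2(\mathfrak{o})$, $\varphi_1(y)=\begin{pmatrix}a&b&0\\c&d&0\\0&0&1\end{pmatrix}$ and $\varphi_2(y)=\begin{pmatrix}1&0&0\\0&a&b\\0&c&d\end{pmatrix}$. *)

theory Defs
  imports "HOL-Analysis.Analysis"
begin

definition omega :: complex where
  "omega = cis (2 * pi / 3)"

definition eis :: "complex set" where
  "eis = {of_int a + of_int b * omega | a b. True}"

definition eis_units :: "complex set" where
  "eis_units = {x \<in> eis. \<exists>y \<in> eis. x * y = 1}"

definition unit_reps :: "complex set \<Rightarrow> bool" where
  "unit_reps R \<longleftrightarrow> R \<subseteq> eis - {0} \<and>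
     (\<forall>z \<in> eis - {0}. \<exists>!r. r \<in> R \<and> (\<exists>u \<in> eis_units. z = u * r))"

definition residue_reps :: "complex \<Rightarrow> complex set \<Rightarrow> bool" where
  "residue_reps c S \<longleftrightarrow> S \<subseteq> eis \<and>
     (\<forall>x \<in> eis. \<exists>!s. s \<in> S \<and> (\<exists>k \<in> eis. x - s = c * k))"

definition SL2_eis :: "(complex^2^2) set" where
  "SL2_eis = {y. (\<forall>i j. y$i$j \<in> eis) \<and> det y = 1}"

definition SL3_eis :: "(complex^3^3) set" where
  "SL3_eis = {A. (\<forall>i j. A$i$j \<in> eis) \<and> det A = 1}"

definition mat2 :: "complex \<Rightarrow> complex \<Rightarrow> complex \<Rightarrow> complex \<Rightarrow> complex^2^2" where
  "mat2 a b c d = vector [vector [a, b], vector [c, d]]"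

definition mat3 :: "complex \<Rightarrow> complex \<Rightarrow> complex \<Rightarrow> complex \<Rightarrow> complex \<Rightarrow> complex
     \<Rightarrow> complex \<Rightarrow> complex \<Rightarrow> complex \<Rightarrow> complex^3^3" where
  "mat3 a11 a12 a13 a21 a22 a23 a31 a32 a33 =
     vector [vector [a11, a12, a13], vector [a21, a22, a23], vector [a31, a32, a33]]"

definition Yset :: "complex set \<Rightarrow> (complex \<Rightarrow> complex set) \<Rightarrow> (complex^2^2) set" where
  "Yset R S = {mat2 a b c d | a b c d. mat2 a b c d \<in> SL2_eis \<and> c \<in> R \<and> a \<in> S c}
              \<union> {mat 1}"

definition phi1 :: "complex^2^2 \<Rightarrow> complex^3^3" where
  "phi1 y = mat3 (y$1$1) (y$1$2) 0 (y$2$1) (y$2$2) 0 0 0 1"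

definition phi2 :: "complex^2^2 \<Rightarrow> complex^3^3" where
  "phi2 y = mat3 1 0 0 0 (y$1$1) (y$1$2) 0 (y$2$1) (y$2$2)"

definition Gamma3 :: "(complex^3^3) set" where
  "Gamma3 = {A \<in> SL3_eis. \<forall>i j. \<exists>k \<in> eis. A$i$j - (mat 1 :: complex^3^3)$i$j = 3 * k}"

definition Gamma_inf3 :: "(complex^3^3) set" where
  "Gamma_inf3 = {A \<in> Gamma3. \<exists>x y z. A = mat3 1 x y 0 1 z 0 0 1}"

definition D3 :: "(complex^3^3) set" where
  "D3 = {mat3 i 0 0 0 j 0 0 0 k | i j k. i \<in> eis \<and> j \<in> eis \<and> k \<in> eis \<and> i * j * k = 1}"

definition small_eis :: "complex set" where
  "small_eis = {of_int a + of_int b * omega | a b. a \<in> {0,1,2} \<and> b \<in> {0,1,2}}"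

definition U3 :: "(complex^3^3) set" where
  "U3 = {mat3 1 \<alpha> \<beta> 0 1 \<gamma> 0 0 1 | \<alpha> \<beta> \<gamma>. \<alpha> \<in> small_eis \<and> \<beta> \<in> small_eis \<and> \<gamma> \<in> small_eis}"

end

theory Submission
  imports Defs
begin


lemma mat2_nth: "mat2 a b c d $ 1 $ 1 = a" "mat2 a b c d $ 1 $ 2 = b"
  "mat2 a b c d $ 2 $ 1 = c" "mat2 a b c d $ 2 $ 2 = d"
  by (simp_all add: mat2_def)

lemma mat3_nth: "mat3 a11 a12 a13 a21 a22 a23 a31 a32 a33 $ 1 $ 1 = a11"
  "mat3 a11 a12 a13 a21 a22 a23 a31 a32 a33 $ 1 $ 2 = a12"
  "mat3 a11 a12 a13 a21 a22 a23 a31 a32 a33 $ 1 $ 3 = a13"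
  "mat3 a11 a12 a13 a21 a22 a23 a31 a32 a33 $ 2 $ 1 = a21"
  "mat3 a11 a12 a13 a21 a22 a23 a31 a32 a33 $ 2 $ 2 = a22"
  "mat3 a11 a12 a13 a21 a22 a23 a31 a32 a33 $ 2 $ 3 = a23"
  "mat3 a11 a12 a13 a21 a22 a23 a31 a32 a33 $ 3 $ 1 = a31"
  "mat3 a11 a12 a13 a21 a22 a23 a31 a32 a33 $ 3 $ 2 = a32"
  "mat3 a11 a12 a13 a21 a22 a23 a31 a32 a33 $ 3 $ 3 = a33"
  by (simp_all add: mat3_def)

lemma mat2_eta: "(y::complex^2^2) = mat2 (y$1$1) (y$1$2) (y$2$1) (y$2$2)"
  by (simp add: vec_eq_iff forall_2 mat2_nth)

lemma mat3_eta: "(A::complex^3^3) = mat3 (A$1$1) (A$1$2) (A$1$3) (A$2$1) (A$2$2) (A$2$3) (A$3$1) (A$3$2) (A$3$3)"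
  by (simp add: vec_eq_iff forall_3 mat3_nth)

lemma mat2_eq: "mat2 a b c d = mat2 a' b' c' d' \<longleftrightarrow> a = a' \<and> b = b' \<and> c = c' \<and> d = d'"
  by (auto simp add: vec_eq_iff forall_2 mat2_nth)

lemma mat3_eq: "mat3 a11 a12 a13 a21 a22 a23 a31 a32 a33 = mat3 b11 b12 b13 b21 b22 b23 b31 b32 b33 \<longleftrightarrow>
  a11 = b11 \<and> a12 = b12 \<and> a13 = b13 \<and> a21 = b21 \<and> a22 = b22 \<and> a23 = b23 \<and> a31 = b31 \<and> a32 = b32 \<and> a33 = b33"
  by (auto simp add: vec_eq_iff forall_3 mat3_nth)

lemma mat2_mult: "mat2 a b c d ** mat2 a' b' c' d' = mat2 (a*a'+b*c') (a*b'+b*d') (c*a'+d*c') (c*b'+d*d')"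
  by (simp add: vec_eq_iff forall_2 mat2_nth matrix_matrix_mult_def sum_2)

lemma mat3_mult: "mat3 a11 a12 a13 a21 a22 a23 a31 a32 a33 ** mat3 b11 b12 b13 b21 b22 b23 b31 b32 b33 =
  mat3 (a11*b11+a12*b21+a13*b31) (a11*b12+a12*b22+a13*b32) (a11*b13+a12*b23+a13*b33)
       (a21*b11+a22*b21+a23*b31) (a21*b12+a22*b22+a23*b32) (a21*b13+a22*b23+a23*b33)
       (a31*b11+a32*b21+a33*b31) (a31*b12+a32*b22+a33*b32) (a31*b13+a32*b23+a33*b33)"
  by (simp add: vec_eq_iff forall_3 mat3_nth matrix_matrix_mult_def sum_3)

lemma mat2_one: "(mat 1 :: complex^2^2) = mat2 1 0 0 1"
  by (simp add: vec_eq_iff forall_2 mat2_nth mat_def)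

lemma mat3_one: "(mat 1 :: complex^3^3) = mat3 1 0 0 0 1 0 0 0 1"
  by (simp add: vec_eq_iff forall_3 mat3_nth mat_def)

lemma det_mat2: "det (mat2 a b c d) = a*d - b*c"
  by (simp add: det_2 mat2_nth)

lemma det_mat3: "det (mat3 a11 a12 a13 a21 a22 a23 a31 a32 a33) =
  a11*a22*a33 + a12*a23*a31 + a13*a21*a32 - a11*a23*a32 - a12*a21*a33 - a13*a22*a31"
  by (simp add: det_3 mat3_nth)

lemma matrix_inv_mat2:
  assumes "a*d - b*c = 1"
  shows "matrix_inv (mat2 a b c d) = mat2 d (-b) (-c) a"
proof -
  let ?P = "\<lambda>A'. mat2 a b c d ** A' = mat 1 \<and> A' ** mat2 a b c d = mat 1"
  have P: "?P (mat2 d (-b) (-c) a)"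
    using assms by (simp add: mat2_mult mat2_one mat2_eq algebra_simps)
  have "?P (matrix_inv (mat2 a b c d))"
    unfolding matrix_inv_def by (rule someI[of ?P, OF P])
  then have "matrix_inv (mat2 a b c d) = matrix_inv (mat2 a b c d) ** (mat2 a b c d ** mat2 d (-b) (-c) a)"
    using P by simp
  also have "\<dots> = mat2 d (-b) (-c) a"
    by (simp add: matrix_mul_assoc \<open>?P (matrix_inv (mat2 a b c d))\<close>)
  finally show ?thesis .
qed



lemma omega_Re: "Re omega = -1/2" and omega_Im: "Im omega = sqrt 3 / 2"
  by (simp_all add: omega_def cos_120 sin_120)

lemma omega_sq: "omega * omega = -1 - omega"
  by (simp add: complex_eq_iff omega_Re omega_Im algebra_simps)

lemma eisI: "of_int a + of_int b * omega \<in> eis"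
  unfolding eis_def by blast

lemma eisE: assumes "z \<in> eis" obtains a b :: int where "z = of_int a + of_int b * omega"
  using assms unfolding eis_def by blast

lemma eis_0[simp]: "0 \<in> eis" using eisI[of 0 0] by simp
lemma eis_1[simp]: "1 \<in> eis" using eisI[of 1 0] by simp
lemma eis_3[simp]: "3 \<in> eis" using eisI[of 3 0] by simp

lemma eis_add[simp]: "x \<in> eis \<Longrightarrow> y \<in> eis \<Longrightarrow> x + y \<in> eis"
proof -
  assume "x \<in> eis" "y \<in> eis"
  then obtain a b c d where "x = of_int a + of_int b * omega" "y = of_int c + of_int d * omega"
    by (metis eisE)
  then have "x + y = of_int (a+c) + of_int (b+d) * omega" by (simp add: algebra_simps)
  then show ?thesis by (metis eisI)
qed

lemma eis_uminus[simp]: "x \<in> eis \<Longrightarrow> - x \<in> eis"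
proof -
  assume "x \<in> eis"
  then obtain a b where "x = of_int a + of_int b * omega"
    by (metis eisE)
  then have "- x = of_int (-a) + of_int (-b) * omega" by (simp add: algebra_simps)
  then show ?thesis by (metis eisI)
qed

lemma eis_diff[simp]: "x \<in> eis \<Longrightarrow> y \<in> eis \<Longrightarrow> x - y \<in> eis"
  using eis_add[of x "-y"] by simp

lemma eis_mult[simp]: "x \<in> eis \<Longrightarrow> y \<in> eis \<Longrightarrow> x * y \<in> eis"
proof -
  assume "x \<in> eis" "y \<in> eis"
  then obtain a b c d where xy: "x = of_int a + of_int b * omega" "y = of_int c + of_int d * omega"
    by (metis eisE)
  have "x * y = of_int a * of_int c + (of_int a * of_int d + of_int b * of_int c) * omega + of_int b * of_int d * (omega * omega)"
    by (simp add: xy algebra_simps)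
  also have "\<dots> = of_int (a*c - b*d) + of_int (a*d + b*c - b*d) * omega"
    by (simp add: omega_sq algebra_simps)
  finally show ?thesis by (metis eisI)
qed

lemma eis_Re_Im: "Re (of_int a + of_int b * omega) = a - b/2" "Im (of_int a + of_int b * omega) = b * sqrt 3 / 2"
  by (simp_all add: omega_Re omega_Im)

lemma eis_norm: "z \<in> eis \<Longrightarrow> \<exists>n::nat. (cmod z)^2 = real n"
proof -
  assume "z \<in> eis"
  then obtain a b where z: "z = of_int a + of_int b * omega" by (metis eisE)
  have "(cmod z)^2 = (Re z)^2 + (Im z)^2" by (simp add: cmod_power2)
  also have "\<dots> = (a - b/2)^2 + (b * sqrt 3 / 2)^2" by (simp add: z omega_Re omega_Im)
  also have "\<dots> = of_int (a*a - a*b + b*b)" by (simp add: power2_eq_square algebra_simps)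
  finally have e: "(cmod z)^2 = of_int (a*a - a*b + b*b)" .
  have "a*a - a*b + b*b \<ge> 0"
  proof -
    have "0 \<le> (2*a - b)^2 + 3*b^2" by simp
    also have "\<dots> = 4 * (a*a - a*b + b*b)" by (simp add: power2_eq_square algebra_simps)
    finally show ?thesis by simp
  qed
  then show ?thesis using e by (metis of_int_of_nat_eq of_nat_nat)
qed

lemma eis_approx: "\<exists>q \<in> eis. cmod (z - q) < 1"
proof -
  define t where "t = Im z * 2 / sqrt 3"
  define s where "s = Re z + t / 2"
  define a where "a = round s"
  define b where "b = round t"
  define \<sigma> where "\<sigma> = s - a"
  define \<tau> where "\<tau> = t - b"
  have hs: "\<bar>\<sigma>\<bar> \<le> 1/2" unfolding \<sigma>_def a_def using of_int_round_abs_le[of s] by linarith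
  have ht: "\<bar>\<tau>\<bar> \<le> 1/2" unfolding \<tau>_def b_def using of_int_round_abs_le[of t] by linarith
  let ?q = "of_int a + of_int b * omega"
  have re: "Re (z - ?q) = \<sigma> - \<tau>/2"
    by (simp add: omega_Re omega_Im \<sigma>_def \<tau>_def s_def field_simps)
  have im: "Im (z - ?q) = \<tau> * sqrt 3 / 2"
    by (simp add: omega_Re omega_Im \<tau>_def t_def algebra_simps)
  have "(cmod (z - ?q))^2 = (Re (z - ?q))^2 + (Im (z - ?q))^2"
    by (rule cmod_power2)
  also have "\<dots> = (\<sigma> - \<tau>/2)^2 + (\<tau> * sqrt 3 / 2)^2"
    unfolding re im ..
  also have "\<dots> = \<sigma>^2 - \<sigma>*\<tau> + \<tau>^2" by (simp add: power2_eq_square algebra_simps)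
  also have "\<dots> < 1"
  proof -
    have "\<sigma>^2 \<le> (1/2)^2" using hs by (metis abs_ge_zero power2_abs power_mono)
    moreover have "\<tau>^2 \<le> (1/2)^2" using ht by (metis abs_ge_zero power2_abs power_mono)
    moreover have "\<bar>\<sigma>*\<tau>\<bar> \<le> 1/2 * (1/2)" unfolding abs_mult
      using hs ht by (intro mult_mono) auto
    ultimately show ?thesis by (simp add: power2_eq_square abs_le_iff)
  qed
  finally have "cmod (z - ?q) < 1" by (simp add: power_less_one_iff)
  then show ?thesis using eisI by blast
qed

lemma eis_euclid: assumes "p \<in> eis" "q \<in> eis" "q \<noteq> 0"
  shows "\<exists>k \<in> eis. cmod (p - k*q) < cmod q"
proof -
  obtain k where k: "k \<in> eis" "cmod (p/q - k) < 1" using eis_approx by blast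
  have "p - k*q = q * (p/q - k)" using assms(3) by (simp add: field_simps)
  then have "cmod (p - k*q) = cmod q * cmod (p/q - k)" by (simp add: norm_mult)
  also have "\<dots> < cmod q" using k assms(3) by simp
  finally show ?thesis using k by blast
qed



lemma eis_bezout_aux:
  "\<forall>p q. p \<in> eis \<longrightarrow> q \<in> eis \<longrightarrow> (cmod q)^2 = real n \<longrightarrow>
     (\<exists>a\<in>eis. \<exists>b\<in>eis. \<exists>c\<in>eis. \<exists>d\<in>eis. a*d - b*c = 1 \<and> c*p + d*q = 0)"
proof (induction n rule: less_induct)
  case (less n)
  show ?case
  proof (intro allI impI)
    fix p q assume p: "p \<in> eis" and q: "q \<in> eis" and n: "(cmod q)^2 = real n"
    show "\<exists>a\<in>eis. \<exists>b\<in>eis. \<exists>c\<in>eis. \<exists>d\<in>eis. a*d - b*c = 1 \<and> c*p + d*q = 0"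
    proof (cases "q = 0")
      case True
      then show ?thesis by (intro bexI[of _ 1] bexI[of _ 0]) auto
    next
      case False
      obtain k where k: "k \<in> eis" "cmod (p - k*q) < cmod q" using eis_euclid[OF p q False] by blast
      define r where "r = p - k*q"
      have r: "r \<in> eis" using p q k by (simp add: r_def)
      obtain m :: nat where m: "(cmod (-r))^2 = real m" using eis_norm[of "-r"] r by auto
      have "(cmod (-r))^2 < (cmod q)^2" using k(2) unfolding r_def
        by (simp add: norm_minus_commute power_strict_mono)
      then have "m < n" using m n by simp
      have "-r \<in> eis" using r by simp
      then have "\<exists>a\<in>eis. \<exists>b\<in>eis. \<exists>c\<in>eis. \<exists>d\<in>eis. a*d - b*c = 1 \<and> c*q + d*(-r) = 0"
        using less.IH[OF \<open>m < n\<close>] q m by blast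
      then obtain a b c d where abcd: "a\<in>eis" "b\<in>eis" "c\<in>eis" "d\<in>eis" "a*d - b*c = 1" "c*q + d*(-r) = 0"
        by blast
      have m1: "-b \<in> eis" "a + b*k \<in> eis" "-d \<in> eis" "c + d*k \<in> eis"
        using abcd(1-4) k(1) by simp_all
      have e1: "(-b) * (c + d*k) - (a + b*k) * (-d) = 1"
      proof -
        have "(-b) * (c + d*k) - (a + b*k) * (-d) = a*d - b*c" by (simp add: algebra_simps)
        then show ?thesis using abcd(5) by simp
      qed
      have e2: "(-d) * p + (c + d*k) * q = 0"
      proof -
        have "(-d) * p + (c + d*k) * q = c*q + d*(-r)" by (simp add: r_def algebra_simps)
        then show ?thesis using abcd(6) by simp
      qed
      show ?thesis using m1 e1 e2 by blast
    qed
  qed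
qed

lemma eis_bezout: "p \<in> eis \<Longrightarrow> q \<in> eis \<Longrightarrow>
     (\<exists>a\<in>eis. \<exists>b\<in>eis. \<exists>c\<in>eis. \<exists>d\<in>eis. a*d - b*c = 1 \<and> c*p + d*q = 0)"
  using eis_bezout_aux eis_norm by blast


lemma kill:
  assumes R: "unit_reps R" and S: "\<And>c. c \<in> eis - {0} \<Longrightarrow> residue_reps c (S c)"
    and p: "p \<in> eis" and q: "q \<in> eis"
  shows "\<exists>y \<in> Yset R S. y$2$1 * p + y$2$2 * q = 0"
proof (cases "q = 0")
  case True
  have "mat 1 \<in> Yset R S" unfolding Yset_def by blast
  then show ?thesis using True by (intro bexI[of _ "mat 1"]) (auto simp: mat2_one mat2_nth)
next
  case False
  obtain a b c d where abcd: "a\<in>eis" "b\<in>eis" "c\<in>eis" "d\<in>eis" "a*d - b*c = 1" "c*p + d*q = 0"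
    using eis_bezout[OF p q] by blast
  have c0: "c \<noteq> 0"
  proof
    assume "c = 0"
    then have "d = 0" using abcd(6) False by simp
    then show False using abcd(5) \<open>c = 0\<close> by simp
  qed
  obtain r u where r: "r \<in> R" and u: "u \<in> eis_units" and cu: "c = u * r"
    using R abcd(3) c0 unfolding unit_reps_def by blast
  have rE: "r \<in> eis" "r \<noteq> 0" using R r unfolding unit_reps_def by auto
  obtain v where v: "v \<in> eis" "u * v = 1" using u unfolding eis_units_def by blast
  have uE: "u \<in> eis" using u unfolding eis_units_def by blast
  have rv: "r = c * v" using cu v(2) by (metis mult.assoc mult.commute mult_1_right)
  have "residue_reps r (S r)" using S rE by blast
  then obtain s k where s: "s \<in> S r" "k \<in> eis" "a*u - s = r * k" "s \<in> eis"
    using abcd(1) uE unfolding residue_reps_def by (metis eis_mult subsetD)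
  define y where "y = mat2 s (b*u - k*d* v) r (d* v)"
  have s_eq: "s = a*u - r*k" using s(3) by (simp add: algebra_simps)
  have det: "s * (d* v) - (b*u - k*d* v) * r = 1"
  proof -
    have "s * (d* v) - (b*u - k*d* v) * r = (a*d - b*c)*(u* v)"
      by (simp add: s_eq rv algebra_simps)
    then show ?thesis using v(2) abcd(5) by simp
  qed
  have ent: "s \<in> eis" "b*u - k*d* v \<in> eis" "r \<in> eis" "d* v \<in> eis"
    using s(2,4) abcd(1-4) v(1) uE rE(1) by simp_all
  have "y \<in> SL2_eis" unfolding SL2_eis_def y_def
    using ent det by (simp only: det_mat2 mat2_nth forall_2 mem_Collect_eq simp_thms)
  then have "y \<in> Yset R S" unfolding Yset_def y_def using r s by blast
  moreover have "y$2$1 * p + y$2$2 * q = 0"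
  proof -
    have "y$2$1 * p + y$2$2 * q = v * (c*p + d*q)" by (simp add: y_def mat2_nth rv algebra_simps)
    then show ?thesis using abcd(6) by simp
  qed
  ultimately show ?thesis by blast
qed


lemma small_decomp: "z \<in> eis \<Longrightarrow> \<exists>s\<in>small_eis. \<exists>k\<in>eis. z = s + 3*k"
proof -
  assume "z \<in> eis"
  then obtain a b where z: "z = of_int a + of_int b * omega" by (metis eisE)
  let ?s = "of_int (a mod 3) + of_int (b mod 3) * omega"
  let ?k = "of_int (a div 3) + of_int (b div 3) * omega"
  have "?s \<in> small_eis" unfolding small_eis_def
  proof (intro CollectI exI conjI)
    show "a mod 3 \<in> {0,1,2}" by auto
    show "b mod 3 \<in> {0,1,2}" by auto
  qed simp
  moreover have "z = ?s + 3 * ?k"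
  proof -
    have "a = a mod 3 + 3 * (a div 3)" "b = b mod 3 + 3 * (b div 3)" by simp_all
    then have "(of_int a :: complex) = of_int (a mod 3) + 3 * of_int (a div 3)"
              "(of_int b :: complex) = of_int (b mod 3) + 3 * of_int (b div 3)"
      by (metis of_int_add of_int_mult of_int_numeral)+
    then show ?thesis unfolding z by (simp add: algebra_simps)
  qed
  ultimately show ?thesis using eisI by blast
qed



lemma phi1_mat2: "phi1 (mat2 a b c d) = mat3 a b 0 c d 0 0 0 1"
  by (simp add: phi1_def mat2_nth)
lemma phi2_mat2: "phi2 (mat2 a b c d) = mat3 1 0 0 0 a b 0 c d"
  by (simp add: phi2_def mat2_nth)

lemma Yset_SL2: "y \<in> Yset R S \<Longrightarrow> y \<in> SL2_eis"
  unfolding Yset_def SL2_eis_def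
  by (auto simp: mat2_one mat2_nth det_mat2 forall_2)

lemma SL2_inv: assumes "y \<in> SL2_eis"
  shows "matrix_inv y ** y = mat 1"
proof -
  have d: "y$1$1 * y$2$2 - y$1$2 * y$2$1 = 1" using assms unfolding SL2_eis_def by (simp add: det_2)
  have "matrix_inv y = mat2 (y$2$2) (-(y$1$2)) (-(y$2$1)) (y$1$1)"
    by (subst mat2_eta, rule matrix_inv_mat2[OF d])
  then show ?thesis using d
    by (subst (2) mat2_eta) (simp add: mat2_mult mat2_one mat2_eq algebra_simps)
qed

lemma mat2_cases: obtains a b c d where "(y::complex^2^2) = mat2 a b c d"
  using mat2_eta by blast

lemma phi1_mult: "phi1 (x ** y) = phi1 x ** phi1 y"
  by (cases x rule: mat2_cases, cases y rule: mat2_cases) (simp add: mat2_mult phi1_mat2 mat3_mult)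

lemma phi2_mult: "phi2 (x ** y) = phi2 x ** phi2 y"
  by (cases x rule: mat2_cases, cases y rule: mat2_cases) (simp add: mat2_mult phi2_mat2 mat3_mult)

lemma phi1_one: "phi1 (mat 1) = mat 1" by (simp add: mat2_one phi1_mat2 mat3_one)
lemma phi2_one: "phi2 (mat 1) = mat 1" by (simp add: mat2_one phi2_mat2 mat3_one)

lemma phi1_cancel: "y \<in> SL2_eis \<Longrightarrow> phi1 (matrix_inv y) ** (phi1 y ** X) = X"
  by (simp add: matrix_mul_assoc phi1_mult[symmetric] SL2_inv phi1_one)
lemma phi2_cancel: "y \<in> SL2_eis \<Longrightarrow> phi2 (matrix_inv y) ** (phi2 y ** X) = X"
  by (simp add: matrix_mul_assoc phi2_mult[symmetric] SL2_inv phi2_one)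

lemma SL2_ent: "y \<in> SL2_eis \<Longrightarrow> y$i$j \<in> eis" unfolding SL2_eis_def by auto
lemma SL2_det: "y \<in> SL2_eis \<Longrightarrow> det y = 1" unfolding SL2_eis_def by auto

lemma phi1_SL3: "y \<in> SL2_eis \<Longrightarrow> phi1 y \<in> SL3_eis"
proof (cases y rule: mat2_cases)
  case (1 a b c d)
  assume y: "y \<in> SL2_eis"
  then show ?thesis using SL2_det[OF y] SL2_ent[OF y, of 1 1] SL2_ent[OF y, of 1 2] SL2_ent[OF y, of 2 1] SL2_ent[OF y, of 2 2] unfolding SL3_eis_def 1
    by (simp add: phi1_mat2 forall_3 forall_2 mat3_nth mat2_nth det_mat3 det_mat2 algebra_simps)
qed

lemma phi2_SL3: "y \<in> SL2_eis \<Longrightarrow> phi2 y \<in> SL3_eis"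
proof (cases y rule: mat2_cases)
  case (1 a b c d)
  assume y: "y \<in> SL2_eis"
  then show ?thesis using SL2_det[OF y] SL2_ent[OF y, of 1 1] SL2_ent[OF y, of 1 2] SL2_ent[OF y, of 2 1] SL2_ent[OF y, of 2 2] unfolding SL3_eis_def 1
    by (simp add: phi2_mat2 forall_3 forall_2 mat3_nth mat2_nth det_mat3 det_mat2 algebra_simps)
qed

lemma SL3_mult: "X \<in> SL3_eis \<Longrightarrow> Y \<in> SL3_eis \<Longrightarrow> X ** Y \<in> SL3_eis"
  unfolding SL3_eis_def
  by (simp add: det_mul) (simp add: matrix_matrix_mult_def sum_3)

lemma phi1_entry: "(phi1 y ** X)$3$j = X$3$j"
  "(phi1 y ** X)$2$j = y$2$1 * X$1$j + y$2$2 * X$2$j"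
  by (simp_all add: phi1_def matrix_matrix_mult_def sum_3 mat3_nth)

lemma phi2_entry:
  "(phi2 y ** X)$2$j = y$1$1 * X$2$j + y$1$2 * X$3$j"
  "(phi2 y ** X)$3$j = y$2$1 * X$2$j + y$2$2 * X$3$j"
  by (simp_all add: phi2_def matrix_matrix_mult_def sum_3 mat3_nth)

lemma SL3_ent: "X \<in> SL3_eis \<Longrightarrow> X$i$j \<in> eis" unfolding SL3_eis_def by auto



lemma upper_decomp:
  assumes M: "M \<in> SL3_eis" and z: "M$2$1 = 0" "M$3$1 = 0" "M$3$2 = 0"
  shows "\<exists>d\<in>D3. \<exists>u\<in>U3. \<exists>C\<in>Gamma_inf3. M = d ** u ** C"
proof -
  define m11 where "m11 = M$1$1"
  define m12 where "m12 = M$1$2"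
  define m13 where "m13 = M$1$3"
  define m22 where "m22 = M$2$2"
  define m23 where "m23 = M$2$3"
  define m33 where "m33 = M$3$3"
  have Meq: "M = mat3 m11 m12 m13 0 m22 m23 0 0 m33"
    using z by (subst mat3_eta) (simp add: m11_def m12_def m13_def m22_def m23_def m33_def)
  have E: "m11 \<in> eis" "m12 \<in> eis" "m13 \<in> eis" "m22 \<in> eis" "m23 \<in> eis" "m33 \<in> eis"
    using SL3_ent[OF M] by (simp_all add: m11_def m12_def m13_def m22_def m23_def m33_def)
  have det1: "m11 * m22 * m33 = 1"
    using M unfolding SL3_eis_def by (simp add: Meq det_mat3)
  define x where "x = m12 * m22 * m33"
  define w where "w = m23 * m11 * m33"
  define zz where "zz = m13 * m22 * m33"
  obtain \<alpha> p where ap: "\<alpha> \<in> small_eis" "p \<in> eis" "x = \<alpha> + 3* p"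
    using small_decomp[of x] E by (auto simp: x_def)
  obtain \<gamma> s where gs: "\<gamma> \<in> small_eis" "s \<in> eis" "w = \<gamma> + 3* s"
    using small_decomp[of w] E by (auto simp: w_def)
  have sm: "\<alpha> \<in> eis" using ap(1) unfolding small_eis_def eis_def by blast
  obtain \<beta> r where br: "\<beta> \<in> small_eis" "r \<in> eis" "zz - 3* \<alpha>* s = \<beta> + 3* r"
    using small_decomp[of "zz - 3* \<alpha>* s"] E gs(2) sm by (auto simp: zz_def)
  define d where "d = mat3 m11 0 0 0 m22 0 0 0 m33"
  define u where "u = mat3 1 \<alpha> \<beta> 0 1 \<gamma> 0 0 1"
  define C where "C = mat3 1 (3* p) (3* r) 0 1 (3* s) 0 0 1"
  have dD: "d \<in> D3" unfolding D3_def d_def using E det1 by blast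
  have uU: "u \<in> U3" unfolding U3_def u_def using ap br gs by blast
  have CS: "C \<in> SL3_eis" unfolding SL3_eis_def C_def
    using ap(2) br(2) gs(2) by (simp add: forall_3 mat3_nth det_mat3)
  have "\<forall>i j. \<exists>k \<in> eis. C$i$j - (mat 1 :: complex^3^3)$i$j = 3 * k"
    unfolding C_def mat3_one using ap(2) br(2) gs(2) eis_0
    by (simp add: forall_3 mat3_nth)
  then have CG: "C \<in> Gamma_inf3" unfolding Gamma_inf3_def Gamma3_def using CS C_def by blast
  have "d ** u ** C = mat3 m11 (m11 * (\<alpha> + 3* p)) (m11 * (3* r + 3* \<alpha>* s + \<beta>))
                          0 m22 (m22 * (\<gamma> + 3* s)) 0 0 m33"
    by (simp add: d_def u_def C_def mat3_mult algebra_simps)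
  also have "\<dots> = M"
  proof -
    have "m11 * (\<alpha> + 3 * p) = m12 * (m11 * m22 * m33)"
    proof -
      have "m11 * (\<alpha> + 3 * p) = m11 * x" using ap(3) by simp
      then show ?thesis by (simp add: x_def algebra_simps)
    qed
    moreover have "m11 * (3* r + 3* \<alpha>* s + \<beta>) = m13 * (m11 * m22 * m33)"
    proof -
      have "3* r + 3* \<alpha>* s + \<beta> = zz" using br(3) by (simp add: algebra_simps)
      then show ?thesis by (simp add: zz_def algebra_simps)
    qed
    moreover have "m22 * (\<gamma> + 3 * s) = m23 * (m11 * m22 * m33)"
    proof -
      have "m22 * (\<gamma> + 3 * s) = m22 * w" using gs(3) by simp
      then show ?thesis by (simp add: w_def algebra_simps)
    qed
    ultimately show ?thesis unfolding det1 Meq by (simp add: mat3_eq)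
  qed
  finally show ?thesis using dD uU CG by metis
qed

theorem theorem2p10:
  fixes R :: "complex set" and S :: "complex \<Rightarrow> complex set" and A :: "complex^3^3"
  assumes "unit_reps R"
    and "\<And>c. c \<in> eis - {0} \<Longrightarrow> residue_reps c (S c)"
    and "A \<in> SL3_eis"
  shows "\<exists>y1 \<in> Yset R S. \<exists>y2 \<in> Yset R S. \<exists>y3 \<in> Yset R S. \<exists>d \<in> D3. \<exists>u \<in> U3. \<exists>C \<in> Gamma_inf3.
           A = phi2 (matrix_inv y1) ** phi1 (matrix_inv y2) ** phi2 (matrix_inv y3) ** d ** u ** C"
proof -
  note K = kill[OF assms(1,2)]
  obtain y1 where y1: "y1 \<in> Yset R S" "y1$2$1 * A$2$1 + y1$2$2 * A$3$1 = 0"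
    using K[of "A$2$1" "A$3$1"] SL3_ent[OF assms(3)] by blast
  have y1S: "y1 \<in> SL2_eis" using Yset_SL2[OF y1(1)] .
  define A1 where "A1 = phi2 y1 ** A"
  have A1: "A1 \<in> SL3_eis" unfolding A1_def by (rule SL3_mult[OF phi2_SL3[OF y1S] assms(3)])
  have A1z: "A1$3$1 = 0" unfolding A1_def using y1(2) by (simp add: phi2_entry)
  obtain y2 where y2: "y2 \<in> Yset R S" "y2$2$1 * A1$1$1 + y2$2$2 * A1$2$1 = 0"
    using K[of "A1$1$1" "A1$2$1"] SL3_ent[OF A1] by blast
  have y2S: "y2 \<in> SL2_eis" using Yset_SL2[OF y2(1)] .
  define A2 where "A2 = phi1 y2 ** A1"
  have A2: "A2 \<in> SL3_eis" unfolding A2_def by (rule SL3_mult[OF phi1_SL3[OF y2S] A1])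
  have A2z: "A2$2$1 = 0" "A2$3$1 = 0" unfolding A2_def using y2(2) A1z by (simp_all add: phi1_entry)
  obtain y3 where y3: "y3 \<in> Yset R S" "y3$2$1 * A2$2$2 + y3$2$2 * A2$3$2 = 0"
    using K[of "A2$2$2" "A2$3$2"] SL3_ent[OF A2] by blast
  have y3S: "y3 \<in> SL2_eis" using Yset_SL2[OF y3(1)] .
  define M where "M = phi2 y3 ** A2"
  have M: "M \<in> SL3_eis" unfolding M_def by (rule SL3_mult[OF phi2_SL3[OF y3S] A2])
  have Mz: "M$2$1 = 0" "M$3$1 = 0" "M$3$2 = 0" unfolding M_def using y3(2) A2z
    by (simp_all add: phi2_entry)
  obtain d u C where duC: "d \<in> D3" "u \<in> U3" "C \<in> Gamma_inf3" "M = d ** u ** C"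
    using upper_decomp[OF M Mz] by blast
  have "phi2 (matrix_inv y1) ** phi1 (matrix_inv y2) ** phi2 (matrix_inv y3) ** d ** u ** C
      = phi2 (matrix_inv y1) ** (phi1 (matrix_inv y2) ** (phi2 (matrix_inv y3) ** M))"
    by (simp add: duC(4) matrix_mul_assoc)
  also have "\<dots> = A"
    by (simp add: M_def A2_def A1_def phi2_cancel[OF y3S] phi1_cancel[OF y2S] phi2_cancel[OF y1S])
  finally show ?thesis using y1(1) y2(1) y3(1) duC(1-3) by metis
qed

end
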